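(* Let $n\ge2$, $1\le r\le n-1$, $\alpha,\beta,\gamma\in\mathbb{Z}_2^{n-r}$ and $\alpha',\beta',\gamma'\in\mathbb{Z}_2^{r}$. Then $$\mathrm{adp}^{\mathrm{XR}}_r(\alpha'\|\alpha,\ \beta'\|\beta\to\gamma\|\gamma')=\sum_{a,b,c\in\mathbb{Z}_2}\mathrm{padp}_{a,b}(\alpha,\beta,\gamma^{[c]})\,\mathrm{cadp}_{c}(\alpha'^{[a]},\beta'^{[b]},\gamma').$$
   Context: For $x\in\mathbb{Z}_2^m$, $x=(x_0,\dots,x_{m-1})$ is identified with the integer $\sum_i x_i2^{m-1-i}$; arithmetic on $\mathbb{Z}_2^n$ is modulo $2^n$. $\oplus$ is bitwise XOR, $x\lll r=(x_r,\dots,x_{n-1},x_0,\dots,x_{r-1})$, $\overline{x}$ is the bitwise complement, $x^{[a]}=x$ if $a=0$ and $x^{[a]}=\overline{x}$ if $a=1$, and $\alpha\|\beta$ is concatenation ($\alpha$ occupying the most significant positions). $\mathrm{adp}^{\mathrm{XR}}_r(\alpha,\beta\to\gamma)=4^{-n}\#\{(x,y)\in(\mathbb{Z}_2^n)^2: ((x+\alpha)\oplus(y+\beta))\lll r=((x\oplus y)\lll r)+\gamma\}$. Indices $0,\dots,7$ are identified with $\mathbb{Z}_2^3$ via $(p_0,p_1,p_2)\leftrightarrow4p_0+2p_1+p_2$; $e_0,\dots,e_7$ are the standard basis row vectors of $\mathbb{Q}^8$. $A_0$ is the $8\times8$ matrix $\frac14$ times the matrix with rows $(4,0,0,1,0,1,1,0)$,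 $(0,0,0,1,0,1,0,0)$, $(0,0,0,1,0,0,1,0)$, $(0,0,0,1,0,0,0,0)$, $(0,0,0,0,0,1,1,0)$, $(0,0,0,0,0,1,0,0)$, $(0,0,0,0,0,0,1,0)$, $(0,\dots,0)$ (rows and columns indexed $0,\dots,7$), and $(A_k)_{i,j}=(A_0)_{i\oplus k,j\oplus k}$ for $k\in\mathbb{Z}_2^3$. For $\alpha,\beta,\gamma\in\mathbb{Z}_2^m$ let $\omega_i=4\alpha_i+2\beta_i+\gamma_i$. Let $L_0=(1,0,1,0,1,0,1,0)$, $L_1=(0,1,0,1,0,1,0,1)$, $L_{0,0}=(1,1,0,0,0,0,0,0)$, $L_{0,1}=(0,0,1,1,0,0,0,0)$, $L_{1,0}=(0,0,0,0,1,1,0,0)$, $L_{1,1}=(0,0,0,0,0,0,1,1)$, and define $\mathrm{cadp}_c(\alpha,\beta,\gamma)=L_cA_{\omega_0}\cdots A_{\omega_{m-1}}e_0^T$ and $\mathrm{padp}_{a,b}(\alpha,\beta,\gamma)=L_{a,b}A_{\omega_0}\cdots A_{\omega_{m-1}}e_0^T$. *)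

theory Defs
  imports Complex_Main
begin

text \<open>Bit vectors in Z_2^m are lists of booleans of length m; element 0 is the
most significant bit, so xs is identified with sum_i xs_i 2^(m-1-i).\<close>

definition bv_val :: "bool list \<Rightarrow> nat" where
  "bv_val xs = (\<Sum>i<length xs. (if xs ! i then 2 ^ (length xs - 1 - i) else 0))"

definition bv_of :: "nat \<Rightarrow> nat \<Rightarrow> bool list" where
  "bv_of m x = map (\<lambda>i. bit x (m - 1 - i)) [0..<m]"

definition bv_add :: "bool list \<Rightarrow> bool list \<Rightarrow> bool list" where
  "bv_add xs ys = bv_of (length xs) ((bv_val xs + bv_val ys) mod 2 ^ length xs)"

definition bv_xor :: "bool list \<Rightarrow> bool list \<Rightarrow> bool list" where
  "bv_xor xs ys = map2 (\<noteq>) xs ys"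

definition bv_rotl :: "bool list \<Rightarrow> nat \<Rightarrow> bool list" where
  "bv_rotl xs r = rotate r xs"

definition bv_cpl :: "bool list \<Rightarrow> bool \<Rightarrow> bool list" where
  "bv_cpl xs a = (if a then map Not xs else xs)"

definition adpXR :: "nat \<Rightarrow> nat \<Rightarrow> bool list \<Rightarrow> bool list \<Rightarrow> bool list \<Rightarrow> real" where
  "adpXR n r \<alpha> \<beta> \<gamma> =
     real (card {(x, y). length x = n \<and> length y = n \<and>
        bv_rotl (bv_xor (bv_add x \<alpha>) (bv_add y \<beta>)) r
          = bv_add (bv_rotl (bv_xor x y) r) \<gamma>}) / 4 ^ n"

definition A0_int :: "nat list list" where
  "A0_int = [[4,0,0,1,0,1,1,0],
             [0,0,0,1,0,1,0,0],
             [0,0,0,1,0,0,1,0],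
             [0,0,0,1,0,0,0,0],
             [0,0,0,0,0,1,1,0],
             [0,0,0,0,0,1,0,0],
             [0,0,0,0,0,0,1,0],
             [0,0,0,0,0,0,0,0]]"

definition A0 :: "nat \<Rightarrow> nat \<Rightarrow> real" where
  "A0 i j = real (A0_int ! i ! j) / 4"

definition Amat :: "nat \<Rightarrow> nat \<Rightarrow> nat \<Rightarrow> real" where
  "Amat k i j = A0 (xor i k) (xor j k)"

text \<open>prodvec [w_0,...,w_{m-1}] = A_{w_0} ... A_{w_{m-1}} e_0^T (column vector).\<close>
fun prodvec :: "nat list \<Rightarrow> nat \<Rightarrow> real" where
  "prodvec [] = (\<lambda>i. if i = 0 then 1 else 0)"
| "prodvec (k # ks) = (\<lambda>i. \<Sum>j<8. Amat k i j * prodvec ks j)"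

definition omegas :: "bool list \<Rightarrow> bool list \<Rightarrow> bool list \<Rightarrow> nat list" where
  "omegas \<alpha> \<beta> \<gamma> =
     map (\<lambda>i. 4 * of_bool (\<alpha> ! i) + 2 * of_bool (\<beta> ! i) + of_bool (\<gamma> ! i)) [0..<length \<alpha>]"

definition rowvec :: "real list \<Rightarrow> (nat \<Rightarrow> real) \<Rightarrow> real" where
  "rowvec L v = (\<Sum>i<8. L ! i * v i)"

definition Lc :: "bool \<Rightarrow> real list" where
  "Lc c = (if c then [0,1,0,1,0,1,0,1] else [1,0,1,0,1,0,1,0])"

definition Lab :: "bool \<Rightarrow> bool \<Rightarrow> real list" where
  "Lab a b = (if \<not> a \<and> \<not> b then [1,1,0,0,0,0,0,0]
              else if \<not> a \<and> b then [0,0,1,1,0,0,0,0]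
              else if a \<and> \<not> b then [0,0,0,0,1,1,0,0]
              else [0,0,0,0,0,0,1,1])"

definition cadp :: "bool \<Rightarrow> bool list \<Rightarrow> bool list \<Rightarrow> bool list \<Rightarrow> real" where
  "cadp c \<alpha> \<beta> \<gamma> = rowvec (Lc c) (prodvec (omegas \<alpha> \<beta> \<gamma>))"

definition padp :: "bool \<Rightarrow> bool \<Rightarrow> bool list \<Rightarrow> bool list \<Rightarrow> bool list \<Rightarrow> real" where
  "padp a b \<alpha> \<beta> \<gamma> = rowvec (Lab a b) (prodvec (omegas \<alpha> \<beta> \<gamma>))"

end

theory Submission
  imports Defs
begin


lemma hl_mod: "(l::nat) < 2^k \<Longrightarrow> (h*2^k + l) mod 2^k = l" by simp
lemma hl_div: "(l::nat) < 2^k \<Longrightarrow> (h*2^k + l) div 2^k = h" by simp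
lemma tb_hl: "(l::nat) < 2^k \<Longrightarrow> take_bit k (h*2^k + l) = l" by (simp add: take_bit_eq_mod)
lemma db_hl: "(l::nat) < 2^k \<Longrightarrow> drop_bit k (h*2^k + l) = h" by (simp add: drop_bit_eq_div)

lemma xor_lt: "(x::nat) < 2^k \<Longrightarrow> y < 2^k \<Longrightarrow> xor x y < 2^k"
proof -
  assume a: "x < 2^k" "y < 2^k"
  have "take_bit k (xor x y) = xor x y" using a by (simp add: take_bit_nat_eq_self)
  then show ?thesis by (metis take_bit_nat_less_exp)
qed

lemma xor_split: "(l1::nat) < 2^k \<Longrightarrow> l2 < 2^k \<Longrightarrow>
   xor (h1*2^k + l1) (h2*2^k + l2) = (xor h1 h2)*2^k + (xor l1 l2)"
proof -
  assume a: "l1 < 2^k" "l2 < 2^k"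
  let ?w = "xor (h1*2^k + l1) (h2*2^k + l2)"
  have m: "?w mod 2^k = xor l1 l2"
    using a by (simp add: tb_hl flip: take_bit_eq_mod)
  have d: "?w div 2^k = xor h1 h2"
    using a by (simp add: db_hl flip: drop_bit_eq_div)
  show ?thesis by (metis m d div_mult_mod_eq)
qed

lemma hl_eq: "(l1::nat) < 2^k \<Longrightarrow> l2 < 2^k \<Longrightarrow> (h1*2^k + l1 = h2*2^k + l2) = (h1 = h2 \<and> l1 = l2)"
  by (metis hl_div hl_mod)

lemma split_mod: "(rr::nat) < 2^k \<Longrightarrow> (q*2^k + rr) mod 2^(k+j) = (q mod 2^j)*2^k + rr"
proof -
  assume a: "rr < 2^k"
  have "(2::nat)^(k+j) = 2^k*2^j" by (simp add: power_add)
  moreover have "(q*2^k+rr) mod (2^k*2^j) = 2^k*((q*2^k+rr) div 2^k mod 2^j) + (q*2^k+rr) mod 2^k" by (rule mod_mult2_eq)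
  ultimately show ?thesis using a by simp
qed
lemma split_div: "(rr::nat) < 2^k \<Longrightarrow> (q*2^k + rr) div 2^(k+j) = q div 2^j"
proof -
  assume a: "rr < 2^k"
  have "(2::nat)^(k+j) = 2^k*2^j" by (simp add: power_add)
  then show ?thesis using a by (simp add: div_mult2_eq)
qed

lemma bv_val_Nil[simp]: "bv_val [] = 0" by (simp add: bv_val_def)
lemma bv_val_Cons[simp]: "bv_val (b#xs) = of_bool b * 2^length xs + bv_val xs"
proof -
  have "(\<Sum>i<length xs. if (b#xs) ! Suc i then 2 ^ (Suc (length xs) - 1 - Suc i) else 0)
     = (\<Sum>i<length xs. if xs ! i then 2 ^ (length xs - 1 - i) else (0::nat))"
    by (rule sum.cong) auto
  then show ?thesis unfolding bv_val_def length_Cons sum.lessThan_Suc_shift by simp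
qed
lemma bv_val_lt: "bv_val xs < 2^length xs"
  by (induction xs) auto
lemma bv_val_append: "bv_val (xs@ys) = bv_val xs * 2^length ys + bv_val ys"
  by (induction xs) (auto simp: power_add algebra_simps)
lemma bv_val_inj: "length xs = length ys \<Longrightarrow> bv_val xs = bv_val ys \<Longrightarrow> xs = ys"
proof (induction xs arbitrary: ys)
  case Nil then show ?case by simp
next
  case (Cons a xs)
  then obtain b ys' where y: "ys = b # ys'" by (cases ys) auto
  with Cons have "of_bool a * 2^length xs + bv_val xs = of_bool b * 2^length xs + bv_val ys'" by simp
  then have "of_bool a = (of_bool b::nat) \<and> bv_val xs = bv_val ys'"
    using hl_eq[of "bv_val xs" "length ys'" "bv_val ys'"] bv_val_lt[of xs] bv_val_lt[of ys'] Cons y by simp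
  then have "a = b" "bv_val xs = bv_val ys'" by (cases a; cases b; auto)+
  with Cons y show ?case by auto
qed
lemma bv_eq_iff: "length xs = length ys \<Longrightarrow> (xs = ys) = (bv_val xs = bv_val ys)"
  using bv_val_inj by auto
lemma length_bv_of[simp]: "length (bv_of m x) = m" by (simp add: bv_of_def)
lemma bv_of_Suc: "bv_of (Suc m) x = bit x m # bv_of m x"
  unfolding bv_of_def by (simp add: upt_conv_Cons map_Suc_upt[symmetric] del: upt_Suc)
lemma bv_val_bv_of[simp]: "bv_val (bv_of m x) = x mod 2^m"
proof (induction m)
  case 0 then show ?case by (simp add: bv_of_def)
next
  case (Suc m)
  then show ?case using take_bit_Suc_from_most[of m x] by (simp add: bv_of_Suc take_bit_eq_mod)
qed
lemma bv_of_val: "bv_of (length xs) (bv_val xs) = xs"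
  by (rule bv_val_inj) (auto simp: bv_val_lt)
lemma bv_val_xor: "length xs = length ys \<Longrightarrow> bv_val (bv_xor xs ys) = xor (bv_val xs) (bv_val ys)"
proof (induction xs arbitrary: ys)
  case Nil then show ?case by (simp add: bv_xor_def)
next
  case (Cons a xs)
  then obtain b ys' where y: "ys = b # ys'" by (cases ys) auto
  with Cons have IH: "bv_val (bv_xor xs ys') = xor (bv_val xs) (bv_val ys')" by simp
  have l: "length (bv_xor xs ys') = length xs" using Cons y by (simp add: bv_xor_def)
  have "bv_xor (a#xs) ys = (a \<noteq> b) # bv_xor xs ys'" using y by (simp add: bv_xor_def)
  have lx: "bv_val xs < 2^length xs" by (rule bv_val_lt)
  have ly: "bv_val ys' < 2^length xs" using bv_val_lt[of ys'] Cons y by simp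
  have xs: "xor (of_bool a * 2^length xs + bv_val xs) (of_bool b * 2^length xs + bv_val ys')
     = xor (of_bool a) (of_bool b) * 2^length xs + xor (bv_val xs) (bv_val ys')"
    by (rule xor_split[OF lx ly])
  have xb: "xor (of_bool a) (of_bool b) = (of_bool (a \<noteq> b)::nat)" by (cases a; cases b; simp)
  have "bv_val ((a \<noteq> b) # bv_xor xs ys') = of_bool (a \<noteq> b) * 2^length xs + xor (bv_val xs) (bv_val ys')"
    using l IH by simp
  also have "\<dots> = xor (of_bool a * 2^length xs + bv_val xs) (of_bool b * 2^length xs + bv_val ys')"
    unfolding xs xb ..
  finally show ?case using y Cons \<open>bv_xor (a#xs) ys = _\<close> by simp
qed
lemma length_bv_xor[simp]: "length (bv_xor xs ys) = min (length xs) (length ys)" by (simp add: bv_xor_def)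
lemma length_bv_add[simp]: "length (bv_add xs ys) = length xs" by (simp add: bv_add_def)
lemma bv_val_add: "bv_val (bv_add xs ys) = (bv_val xs + bv_val ys) mod 2^length xs"
  by (simp add: bv_add_def)
lemma length_rotl[simp]: "length (bv_rotl xs r) = length xs" by (simp add: bv_rotl_def)
lemma bv_val_rotl: "r < length xs \<Longrightarrow> bv_val (bv_rotl xs r) =
   (bv_val xs mod 2^(length xs - r)) * 2^r + bv_val xs div 2^(length xs - r)"
proof -
  assume r: "r < length xs"
  have rt: "bv_rotl xs r = drop r xs @ take r xs" using r by (simp add: bv_rotl_def rotate_drop_take)
  have v: "bv_val xs = bv_val (take r xs) * 2^(length xs - r) + bv_val (drop r xs)"
    using bv_val_append[of "take r xs" "drop r xs"] by simp
  have lt: "bv_val (drop r xs) < 2^(length xs - r)" using bv_val_lt[of "drop r xs"] by simp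
  show ?thesis unfolding rt bv_val_append v using r lt by simp
qed

definition okS :: "nat \<Rightarrow> nat \<Rightarrow> nat \<Rightarrow> nat \<Rightarrow> nat \<Rightarrow> nat \<Rightarrow> nat \<Rightarrow> bool" where
  "okS m s a b g x y \<longleftrightarrow> xor ((x + a + s div 4) mod 2^m) ((y + b + s div 2 mod 2) mod 2^m)
      = (xor x y + g + s mod 2) mod 2^m"
definition finS :: "nat \<Rightarrow> nat \<Rightarrow> nat \<Rightarrow> nat \<Rightarrow> nat \<Rightarrow> nat \<Rightarrow> nat \<Rightarrow> nat" where
  "finS m s a b g x y = 4 * ((x + a + s div 4) div 2^m) + 2 * ((y + b + s div 2 mod 2) div 2^m)
      + (xor x y + g + s mod 2) div 2^m"

lemma regroup: "(xh*2^k + xl) + (ah*2^k + al) + (c::nat) = (xh + ah + (xl+al+c) div 2^k)*2^k + (xl+al+c) mod 2^k"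
  by (simp add: algebra_simps)

lemma carry_le1: "(xl::nat) < 2^k \<Longrightarrow> al < 2^k \<Longrightarrow> c \<le> 1 \<Longrightarrow> (xl+al+c) div 2^k \<le> 1"
proof -
  assume "xl < 2^k" "al < 2^k" "c \<le> 1"
  then have "xl+al+c < 2*2^k" by simp
  then have "(xl+al+c) div 2^k < 2" using less_mult_imp_div_less[of "xl+al+c" 2 "2^k"] by simp
  then show ?thesis by simp
qed

lemma finS_lt8: "x < 2^m \<Longrightarrow> y < 2^m \<Longrightarrow> a < 2^m \<Longrightarrow> b < 2^m \<Longrightarrow> g < 2^m \<Longrightarrow> s < 8 \<Longrightarrow> finS m s a b g x y < 8"
proof -
  assume h: "x < 2^m" "y < 2^m" "a < 2^m" "b < 2^m" "g < 2^m" "s < 8"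
  have "(x + a + s div 4) div 2^m \<le> 1" using carry_le1[of x m a "s div 4"] h by simp
  moreover have "(y + b + s div 2 mod 2) div 2^m \<le> 1" using carry_le1[of y m b "s div 2 mod 2"] h by simp
  moreover have "(xor x y + g + s mod 2) div 2^m \<le> 1" using carry_le1[of "xor x y" m g "s mod 2"] h xor_lt by simp
  ultimately show ?thesis unfolding finS_def by linarith
qed

lemma concat_S:
  assumes h: "xl < 2^k" "yl < 2^k" "al < 2^k" "bl < 2^k" "gl < 2^k" "s < 8"
  shows "okS (k+j) s (ah*2^k+al) (bh*2^k+bl) (gh*2^k+gl) (xh*2^k+xl) (yh*2^k+yl) \<longleftrightarrow>
           okS k s al bl gl xl yl \<and> okS j (finS k s al bl gl xl yl) ah bh gh xh yh"
    and "finS (k+j) s (ah*2^k+al) (bh*2^k+bl) (gh*2^k+gl) (xh*2^k+xl) (yh*2^k+yl) =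
           finS j (finS k s al bl gl xl yl) ah bh gh xh yh"
proof -
  define L1 where "L1 = xl + al + s div 4"
  define L2 where "L2 = yl + bl + s div 2 mod 2"
  define L3 where "L3 = xor xl yl + gl + s mod 2"
  have xxl: "xor xl yl < 2^k" using h xor_lt by blast
  have xx: "xor (xh*2^k+xl) (yh*2^k+yl) = xor xh yh * 2^k + xor xl yl" using xor_split h by blast
  have d1: "L1 div 2^k \<le> 1" unfolding L1_def using carry_le1 h by simp
  have d2: "L2 div 2^k \<le> 1" unfolding L2_def using carry_le1 h by simp
  have d3: "L3 div 2^k \<le> 1" unfolding L3_def using carry_le1 h xxl by simp
  have F: "finS k s al bl gl xl yl = 4 * (L1 div 2^k) + 2*(L2 div 2^k) + L3 div 2^k"
    unfolding finS_def L1_def L2_def L3_def by simp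
  let ?d = "finS k s al bl gl xl yl"
  have Fd: "?d div 4 = L1 div 2^k" "?d div 2 mod 2 = L2 div 2^k" "?d mod 2 = L3 div 2^k"
    using F d1 d2 d3 by (auto simp: le_Suc_eq)
  have S1: "xh*2^k+xl + (ah*2^k+al) + s div 4 = (xh + ah + L1 div 2^k)*2^k + L1 mod 2^k"
    unfolding L1_def by (rule regroup)
  have S2: "yh*2^k+yl + (bh*2^k+bl) + s div 2 mod 2 = (yh + bh + L2 div 2^k)*2^k + L2 mod 2^k"
    unfolding L2_def by (rule regroup)
  have S3: "xor xh yh * 2^k + xor xl yl + (gh*2^k+gl) + s mod 2 = (xor xh yh + gh + L3 div 2^k)*2^k + L3 mod 2^k"
    unfolding L3_def by (rule regroup)
  have m: "\<And>L. L mod 2^k < (2::nat)^k" by simp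
  have okk: "okS k s al bl gl xl yl \<longleftrightarrow> xor (L1 mod 2^k) (L2 mod 2^k) = L3 mod 2^k"
    unfolding okS_def L1_def L2_def L3_def ..
  have okj: "okS j ?d ah bh gh xh yh \<longleftrightarrow> xor ((xh + ah + L1 div 2^k) mod 2^j) ((yh + bh + L2 div 2^k) mod 2^j)
      = (xor xh yh + gh + L3 div 2^k) mod 2^j"
    unfolding okS_def Fd ..
  have "okS (k+j) s (ah*2^k+al) (bh*2^k+bl) (gh*2^k+gl) (xh*2^k+xl) (yh*2^k+yl) \<longleftrightarrow>
     xor (((xh + ah + L1 div 2^k) mod 2^j)*2^k + L1 mod 2^k) (((yh + bh + L2 div 2^k) mod 2^j)*2^k + L2 mod 2^k)
     = ((xor xh yh + gh + L3 div 2^k) mod 2^j)*2^k + L3 mod 2^k"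
    unfolding okS_def xx S1 S2 S3 split_mod[OF m] ..
  also have "\<dots> \<longleftrightarrow> xor ((xh + ah + L1 div 2^k) mod 2^j) ((yh + bh + L2 div 2^k) mod 2^j) * 2^k + xor (L1 mod 2^k) (L2 mod 2^k)
     = ((xor xh yh + gh + L3 div 2^k) mod 2^j)*2^k + L3 mod 2^k"
    by (simp only: xor_split[OF m m])
  also have "\<dots> \<longleftrightarrow> okS k s al bl gl xl yl \<and> okS j ?d ah bh gh xh yh"
    unfolding okk okj using hl_eq[OF xor_lt[OF m m] m] by blast
  finally show "okS (k+j) s (ah*2^k+al) (bh*2^k+bl) (gh*2^k+gl) (xh*2^k+xl) (yh*2^k+yl) \<longleftrightarrow>
           okS k s al bl gl xl yl \<and> okS j ?d ah bh gh xh yh" .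
  show "finS (k+j) s (ah*2^k+al) (bh*2^k+bl) (gh*2^k+gl) (xh*2^k+xl) (yh*2^k+yl) =
           finS j ?d ah bh gh xh yh"
    unfolding finS_def[of "k+j"] finS_def[of j ?d] xx S1 S2 S3 split_div[OF m] Fd ..
qed

lemma sum2: "(\<Sum>x<2::nat. f x) = f 0 + f 1" by (simp add: numeral_2_eq_2)
lemma lt8: "(w::nat) < 8 \<Longrightarrow> w = 0 \<or> w = 1 \<or> w = 2 \<or> w = 3 \<or> w = 4 \<or> w = 5 \<or> w = 6 \<or> w = 7" by arith
lemma step_tab: "w < 8 \<Longrightarrow> d < 8 \<Longrightarrow> t < 8 \<Longrightarrow>
  (\<Sum>xh<2. \<Sum>yh<2. of_bool(okS 1 d (w div 4) (w div 2 mod 2) (w mod 2) xh yh \<and> finS 1 d (w div 4) (w div 2 mod 2) (w mod 2) xh yh = t) :: real)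
   = 4 * Amat w t d"
  apply (simp only: sum2)
  apply (drule lt8)+
  apply (elim disjE)
  apply (simp_all add: okS_def finS_def Amat_def A0_def A0_int_def)
  done

fun pv :: "nat \<Rightarrow> nat list \<Rightarrow> nat \<Rightarrow> real" where
  "pv s [] = (\<lambda>i. if i = s then 1 else 0)"
| "pv s (k # ks) = (\<lambda>i. \<Sum>j<8. Amat k i j * pv s ks j)"

lemma prodvec_pv: "prodvec ws = pv 0 ws"
  by (induction ws) auto

lemma omegas_Cons: "length al = length bl \<Longrightarrow> length al = length gl \<Longrightarrow>
  omegas (a#al) (b#bl) (g#gl) = (4 * of_bool a + 2 * of_bool b + of_bool g) # omegas al bl gl"
  unfolding omegas_def by (simp add: upt_conv_Cons map_Suc_upt[symmetric] del: upt_Suc)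

lemma length_omegas[simp]: "length (omegas a b g) = length a" by (simp add: omegas_def)

lemma sum_split_pow: "(\<Sum>x<(2::nat)^(k+j). f x) = (\<Sum>xh<2^j. \<Sum>xl<2^k. f (xh*2^k + xl))"
proof -
  have "(\<Sum>x<2^k*N. f x) = (\<Sum>xh<N. \<Sum>xl<2^k. f (xh*2^k + xl))" for N :: nat
  proof (induction N)
    case 0 then show ?case by simp
  next
    case (Suc N)
    have "{..<2^k*Suc N} = {..<2^k*N} \<union> {2^k*N..<2^k*N+2^k}" by auto
    then have "(\<Sum>x<2^k*Suc N. f x) = (\<Sum>x<2^k*N. f x) + (\<Sum>x\<in>{2^k*N..<2^k*N+2^k}. f x)"
      by (simp add: sum.union_disjoint ivl_disj_int)
    also have "(\<Sum>x\<in>{2^k*N..<2^k*N+2^k}. f x) = (\<Sum>xl<2^k. f (N*2^k + xl))"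
      using sum.shift_bounds_nat_ivl[of f 0 "2^k*N" "2^k"]
      by (simp add: atLeast0LessThan add.commute mult.commute)
    finally show ?case using Suc by simp
  qed
  from this[of "2^j"] show ?thesis by (simp add: power_add)
qed
lemma R2: "(\<Sum>y1\<in>C. \<Sum>y2\<in>D. \<Sum>d\<in>E. F y2 d * G y1 d) = (\<Sum>d\<in>E. (\<Sum>y2\<in>D. F y2 d) * (\<Sum>y1\<in>C. G y1 d :: real))"
proof -
  have "(\<Sum>d\<in>E. (\<Sum>y2\<in>D. F y2 d) * (\<Sum>y1\<in>C. G y1 d)) = (\<Sum>d\<in>E. \<Sum>y1\<in>C. \<Sum>y2\<in>D. F y2 d * G y1 d)"
    by (simp add: sum_product sum.swap[of _ D])
  also have "\<dots> = (\<Sum>y1\<in>C. \<Sum>d\<in>E. \<Sum>y2\<in>D. F y2 d * G y1 d)" by (rule sum.swap)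
  also have "\<dots> = (\<Sum>y1\<in>C. \<Sum>y2\<in>D. \<Sum>d\<in>E. F y2 d * G y1 d)" by (simp add: sum.swap[of _ E])
  finally show ?thesis by simp
qed
lemma rearr: "(\<Sum>xh\<in>A. \<Sum>xl\<in>B. \<Sum>yh\<in>C. \<Sum>yl\<in>D. \<Sum>d\<in>E. F xl yl d * G xh yh d) =
   (\<Sum>d\<in>E. (\<Sum>xl\<in>B. \<Sum>yl\<in>D. F xl yl d) * (\<Sum>xh\<in>A. \<Sum>yh\<in>C. G xh yh d :: real))"
proof -
  have "(\<Sum>xh\<in>A. \<Sum>xl\<in>B. \<Sum>yh\<in>C. \<Sum>yl\<in>D. \<Sum>d\<in>E. F xl yl d * G xh yh d) =
    (\<Sum>xh\<in>A. \<Sum>xl\<in>B. \<Sum>d\<in>E. (\<Sum>yl\<in>D. F xl yl d) * (\<Sum>yh\<in>C. G xh yh d))"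
    by (simp only: R2)
  also have "\<dots> = (\<Sum>d\<in>E. (\<Sum>xl\<in>B. \<Sum>yl\<in>D. F xl yl d) * (\<Sum>xh\<in>A. \<Sum>yh\<in>C. G xh yh d))"
    by (rule R2)
  finally show ?thesis .
qed

lemma count_S:
  assumes "length al = m" "length bl = m" "length gl = m" "s < 8" "t < 8"
  shows "(\<Sum>x<2^m. \<Sum>y<2^m. of_bool (okS m s (bv_val al) (bv_val bl) (bv_val gl) x y \<and>
            finS m s (bv_val al) (bv_val bl) (bv_val gl) x y = t) :: real) = 4^m * pv s (omegas al bl gl) t"
  using assms
proof (induction m arbitrary: al bl gl t)
  case 0
  then have "al = []" "bl = []" "gl = []" by auto
  moreover have "4 * (s div 4) + 2 * (s div 2 mod 2) + s mod 2 = s" using \<open>s < 8\<close> by (auto dest!: lt8)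
  ultimately show ?case by (simp add: okS_def finS_def omegas_def)
next
  case (Suc m)
  obtain a al' where ea: "al = a # al'" using Suc.prems by (cases al) auto
  obtain b bl' where eb: "bl = b # bl'" using Suc.prems by (cases bl) auto
  obtain g gl' where eg: "gl = g # gl'" using Suc.prems by (cases gl) auto
  have lens: "length al' = m" "length bl' = m" "length gl' = m" using Suc.prems ea eb eg by auto
  define A where "A = bv_val al'"
  define B where "B = bv_val bl'"
  define G where "G = bv_val gl'"
  have ABG: "A < 2^m" "B < 2^m" "G < 2^m" unfolding A_def B_def G_def using bv_val_lt lens by metis+
  define w :: nat where "w = 4 * of_bool a + 2 * of_bool b + of_bool g"
  have w8: "w < 8" unfolding w_def by simp
  have wd: "w div 4 = of_bool a" "w div 2 mod 2 = of_bool b" "w mod 2 = of_bool g"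
    unfolding w_def by (cases a; cases b; cases g; simp)+
  have vals: "bv_val al = of_bool a * 2^m + A" "bv_val bl = of_bool b * 2^m + B" "bv_val gl = of_bool g * 2^m + G"
    using ea eb eg lens A_def B_def G_def by auto
  have om: "omegas al bl gl = w # omegas al' bl' gl'"
    unfolding ea eb eg w_def using lens by (simp add: omegas_Cons)
  define F where "F xl yl d = (of_bool (okS m s A B G xl yl \<and> finS m s A B G xl yl = d) :: real)" for xl yl d
  define H where "H xh yh d = (of_bool (okS 1 d (w div 4) (w div 2 mod 2) (w mod 2) xh yh \<and>
      finS 1 d (w div 4) (w div 2 mod 2) (w mod 2) xh yh = t) :: real)" for xh yh d
  have trm: "(of_bool (okS (m+1) s (bv_val al) (bv_val bl) (bv_val gl) (xh*2^m+xl) (yh*2^m+yl) \<and>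
            finS (m+1) s (bv_val al) (bv_val bl) (bv_val gl) (xh*2^m+xl) (yh*2^m+yl) = t) :: real)
         = (\<Sum>d<8. F xl yl d * H xh yh d)" if xy: "xl < 2^m" "yl < 2^m" for xh xl yh yl
  proof -
    let ?d = "finS m s A B G xl yl"
    have d8: "?d < 8" using finS_lt8 xy ABG Suc.prems by blast
    have e: "okS (m+1) s (bv_val al) (bv_val bl) (bv_val gl) (xh*2^m+xl) (yh*2^m+yl) \<and>
            finS (m+1) s (bv_val al) (bv_val bl) (bv_val gl) (xh*2^m+xl) (yh*2^m+yl) = t
         \<longleftrightarrow> okS m s A B G xl yl \<and> okS 1 ?d (w div 4) (w div 2 mod 2) (w mod 2) xh yh \<and>
            finS 1 ?d (w div 4) (w div 2 mod 2) (w mod 2) xh yh = t"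
      unfolding vals wd concat_S[OF xy ABG \<open>s < 8\<close>, of 1 "of_bool a" "of_bool b" "of_bool g" xh yh] by (rule refl conj_assoc)
    have "(\<Sum>d<8. F xl yl d * H xh yh d) = F xl yl ?d * H xh yh ?d"
      by (rule sum.mono_neutral_right[of "{..<8}" "{?d}", simplified]) (auto simp: F_def d8)
    then show ?thesis unfolding e F_def H_def by simp
  qed
  have "(\<Sum>x<2^Suc m. \<Sum>y<2^Suc m. of_bool (okS (Suc m) s (bv_val al) (bv_val bl) (bv_val gl) x y \<and>
            finS (Suc m) s (bv_val al) (bv_val bl) (bv_val gl) x y = t) :: real)
     = (\<Sum>xh<2^1. \<Sum>xl<2^m. \<Sum>yh<2^1. \<Sum>yl<2^m. of_bool (okS (m+1) s (bv_val al) (bv_val bl) (bv_val gl) (xh*2^m+xl) (yh*2^m+yl) \<and>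
            finS (m+1) s (bv_val al) (bv_val bl) (bv_val gl) (xh*2^m+xl) (yh*2^m+yl) = t))"
    by (simp only: Suc_eq_plus1 sum_split_pow)
  also have "\<dots> = (\<Sum>xh<2^1. \<Sum>xl<2^m. \<Sum>yh<2^1. \<Sum>yl<2^m. \<Sum>d<8. F xl yl d * H xh yh d)"
    using trm by simp
  also have "\<dots> = (\<Sum>d<8. (\<Sum>xl<2^m. \<Sum>yl<2^m. F xl yl d) * (\<Sum>xh<2^1. \<Sum>yh<2^1. H xh yh d))"
    by (rule rearr)
  also have "\<dots> = (\<Sum>d<8. 4^m * pv s (omegas al' bl' gl') d * (4 * Amat w t d))"
  proof (rule sum.cong[OF refl])
    fix d assume "d \<in> {..<8::nat}"
    then have d8: "d < 8" by simp
    have "(\<Sum>xl<2^m. \<Sum>yl<2^m. F xl yl d) = 4^m * pv s (omegas al' bl' gl') d"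
      unfolding F_def A_def B_def G_def using Suc.IH[OF lens \<open>s < 8\<close> d8] .
    moreover have "(\<Sum>xh<2^1. \<Sum>yh<2^1. H xh yh d) = 4 * Amat w t d"
      unfolding H_def using step_tab[OF w8 d8 \<open>t < 8\<close>] by simp
    ultimately show "(\<Sum>xl<2^m. \<Sum>yl<2^m. F xl yl d) * (\<Sum>xh<2^1. \<Sum>yh<2^1. H xh yh d) =
       4^m * pv s (omegas al' bl' gl') d * (4 * Amat w t d)" by simp
  qed
  also have "\<dots> = 4^Suc m * pv s (omegas al bl gl) t"
    unfolding om by (simp add: sum_distrib_left algebra_simps)
  finally show ?case .
qed

lemma xor8: "(j::nat) < 8 \<Longrightarrow> k < 8 \<Longrightarrow> xor j k < 8"
  using xor_lt[of j 3 k] by simp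

lemma pv_perm: "k < 8 \<Longrightarrow> pv 0 (map (\<lambda>w. xor w k) ws) i = pv k ws (xor i k)"
proof (induction ws arbitrary: i)
  case Nil
  have "(xor i k = k) = (i = 0)"
    by (metis xor.comm_neutral xor.commute xor.left_commute xor_self_eq)
  then show ?case by simp
next
  case (Cons w ws)
  have "pv 0 (map (\<lambda>w. xor w k) (w#ws)) i = (\<Sum>j<8. A0 (xor i (xor w k)) (xor j (xor w k)) * pv k ws (xor j k))"
    using Cons by (simp add: Amat_def)
  also have "\<dots> = (\<Sum>j<8. A0 (xor (xor i k) w) (xor j w) * pv k ws j)"
  proof (rule sum.reindex_bij_witness[where i = "\<lambda>j. xor j k" and j = "\<lambda>j. xor j k"])
    fix a assume "a \<in> {..<8::nat}"
    then show "xor (xor a k) k = a" "xor a k \<in> {..<8}" using xor8 Cons.prems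
      by (auto simp: xor.assoc)
  next
    fix a assume "a \<in> {..<8::nat}"
    then show "xor (xor a k) k = a" "xor a k \<in> {..<8}" using xor8 Cons.prems
      by (auto simp: xor.assoc)
    show "A0 (xor (xor i k) w) (xor (xor a k) w) * pv k ws (xor a k) =
          A0 (xor i (xor w k)) (xor a (xor w k)) * pv k ws (xor a k)"
      by (simp add: xor.assoc xor.commute xor.left_commute)
  qed
  also have "\<dots> = pv k (w#ws) (xor i k)" by (simp add: Amat_def)
  finally show ?case .
qed

lemma sum8: "(\<Sum>i<8::nat. f i) = f 0 + f 1 + f 2 + f 3 + f 4 + f 5 + f 6 + f 7"
  by (simp add: eval_nat_numeral)

lemma el_g: "xor (4*of_bool p + 2*of_bool q + of_bool r) (of_bool c) = (4*of_bool p + 2*of_bool q + of_bool (r \<noteq> c) :: nat)"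
  by (cases p; cases q; cases r; cases c; simp add: numeral_2_eq_2[symmetric] numeral_3_eq_3[symmetric])
lemma el_ab: "xor (4*of_bool p + 2*of_bool q + of_bool r) (4*of_bool x + 2*of_bool y) = (4*of_bool (p \<noteq> x) + 2*of_bool (q \<noteq> y) + of_bool r :: nat)"
  by (cases p; cases q; cases r; cases x; cases y; simp add: numeral_2_eq_2[symmetric] numeral_3_eq_3[symmetric])
lemma nth_cpl: "i < length g \<Longrightarrow> bv_cpl g c ! i = (g ! i \<noteq> c)"
  by (cases c) (auto simp: bv_cpl_def)
lemma length_cpl[simp]: "length (bv_cpl g c) = length g" by (simp add: bv_cpl_def)

lemma omegas_cpl_g: "length a = length b \<Longrightarrow> length a = length g \<Longrightarrow>
  omegas a b (bv_cpl g c) = map (\<lambda>w. xor w (of_bool c)) (omegas a b g)"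
  unfolding omegas_def by (rule nth_equalityI) (simp_all add: el_g nth_cpl)

lemma omegas_cpl_ab: "length a = length b \<Longrightarrow> length a = length g \<Longrightarrow>
  omegas (bv_cpl a x) (bv_cpl b y) g = map (\<lambda>w. xor w (4 * of_bool x + 2 * of_bool y)) (omegas a b g)"
  unfolding omegas_def by (rule nth_equalityI) (simp_all add: el_ab nth_cpl)


lemma "pv 0 (map (\<lambda>w. xor w 1) ws) 1 = pv 1 ws 0"
  apply (subst pv_perm) apply simp
  apply simp
  done
lemma padp_eq: "length al = length bl \<Longrightarrow> length al = length gl \<Longrightarrow>
  padp a b al bl (bv_cpl gl c) = (\<Sum>t<8. of_bool (t div 2 = 2*of_bool a + of_bool b) * pv (of_bool c) (omegas al bl gl) t)"
  unfolding padp_def rowvec_def prodvec_pv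
  apply (subst omegas_cpl_g, assumption, assumption)
  apply (subst pv_perm)
   apply (cases c; simp)
  apply (cases a; cases b; cases c)
  apply (simp_all add: sum8 Lab_def)
  done

lemma st4: "4*of_bool True + 2*of_bool True = (6::nat)" "4*of_bool True + 2*of_bool False = (4::nat)"
  "4*of_bool False + 2*of_bool True = (2::nat)" "4*of_bool False + 2*of_bool False = (0::nat)" by simp_all

lemma cadp_eq: "length al = length bl \<Longrightarrow> length al = length gl \<Longrightarrow>
  cadp c (bv_cpl al a) (bv_cpl bl b) gl = (\<Sum>t<8. of_bool (t mod 2 = of_bool c) * pv (4*of_bool a + 2*of_bool b) (omegas al bl gl) t)"
  unfolding cadp_def rowvec_def prodvec_pv
  apply (subst omegas_cpl_ab, assumption, assumption)
  apply (subst pv_perm)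
   apply (cases a; cases b; simp)
  apply (cases a; cases b; cases c)
  apply (simp_all only: st4)
  apply (simp_all add: sum8 Lc_def)
  apply (simp_all add: numeral_3_eq_3)
  done

declare sum_of_bool_eq[simp del]

lemma gen_count:
  assumes "length al = m" "length bl = m" "length gl = m" "s < 8"
  shows "(\<Sum>x<2^m. \<Sum>y<2^m. of_bool (okS m s (bv_val al) (bv_val bl) (bv_val gl) x y \<and>
            P (finS m s (bv_val al) (bv_val bl) (bv_val gl) x y)) :: real)
       = 4^m * (\<Sum>t<8. of_bool (P t) * pv s (omegas al bl gl) t)"
proof -
  let ?ok = "okS m s (bv_val al) (bv_val bl) (bv_val gl)"
  let ?fin = "finS m s (bv_val al) (bv_val bl) (bv_val gl)"
  have lt: "bv_val al < 2^m" "bv_val bl < 2^m" "bv_val gl < 2^m" using bv_val_lt assms by metis+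
  have e: "(of_bool (?ok x y \<and> P (?fin x y)) :: real) = (\<Sum>t<8. of_bool (P t) * of_bool (?ok x y \<and> ?fin x y = t))"
    if "x < 2^m" "y < 2^m" for x y
  proof -
    have f8: "?fin x y < 8" using finS_lt8 that lt assms(4) by blast
    have "(\<Sum>t<8. (of_bool (P t) * of_bool (?ok x y \<and> ?fin x y = t) :: real)) =
       (\<Sum>t<8. if ?fin x y = t then of_bool (P t) * of_bool (?ok x y) else 0)"
      by (rule sum.cong) auto
    also have "\<dots> = of_bool (P (?fin x y)) * of_bool (?ok x y)"
      by (subst sum.delta') (use f8 in auto)
    moreover have "of_bool (P (?fin x y)) * of_bool (?ok x y) = (of_bool (?ok x y \<and> P (?fin x y)) :: real)" by (cases "?ok x y"; cases "P (?fin x y)") simp_all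
    ultimately show ?thesis by metis
  qed
  have "(\<Sum>x<2^m. \<Sum>y<2^m. of_bool (?ok x y \<and> P (?fin x y)) :: real)
      = (\<Sum>x<2^m. \<Sum>y<2^m. \<Sum>t<8. of_bool (P t) * of_bool (?ok x y \<and> ?fin x y = t))"
    using e by simp
  also have "\<dots> = (\<Sum>x<2^m. \<Sum>t<8. \<Sum>y<2^m. of_bool (P t) * of_bool (?ok x y \<and> ?fin x y = t))"
    by (rule sum.cong[OF refl], rule sum.swap)
  also have "\<dots> = (\<Sum>t<8. \<Sum>x<2^m. \<Sum>y<2^m. of_bool (P t) * of_bool (?ok x y \<and> ?fin x y = t))"
    by (rule sum.swap)
  also have "\<dots> = (\<Sum>t<8. of_bool (P t) * (\<Sum>x<2^m. \<Sum>y<2^m. of_bool (?ok x y \<and> ?fin x y = t)))"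
    by (simp only: sum_distrib_left)
  also have "\<dots> = (\<Sum>t<8. of_bool (P t) * (4^m * pv s (omegas al bl gl) t))"
    using count_S[OF assms] by simp
  finally show ?thesis by (simp add: sum_distrib_left algebra_simps)
qed

lemma sum_triple: "(\<Sum>d\<in>(UNIV::(bool\<times>bool\<times>bool) set). h d) = (\<Sum>a\<in>UNIV. \<Sum>b\<in>UNIV. \<Sum>c\<in>UNIV. h (a,b,c))"
  by (simp add: UNIV_Times_UNIV[symmetric] sum.cartesian_product del: UNIV_Times_UNIV)

definition rotv :: "nat \<Rightarrow> nat \<Rightarrow> nat \<Rightarrow> nat" where
  "rotv m r w = (w mod 2^m) * 2^r + w div 2^m"

lemma Qdec:
  assumes lo: "u0 < 2^m" "v0 < 2^m" "al < 2^m" "bl < 2^m" "gl < 2^m"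
    and hi: "u1 < 2^r" "v1 < 2^r" "ah < 2^r" "bh < 2^r" "gh < 2^r"
  shows "(rotv m r (xor ((u1*2^m+u0 + (ah*2^m+al)) mod 2^(m+r)) ((v1*2^m+v0 + (bh*2^m+bl)) mod 2^(m+r)))
            = (rotv m r (xor (u1*2^m+u0) (v1*2^m+v0)) + (gl*2^r+gh)) mod 2^(m+r))
   \<longleftrightarrow> okS m ((xor u1 v1 + gh) div 2^r) al bl gl u0 v0 \<and>
       okS r (4*((u0+al) div 2^m) + 2*((v0+bl) div 2^m)) ah bh gh u1 v1"
proof -
  define a0 where "a0 = (u0+al) div 2^m"
  define b0 where "b0 = (v0+bl) div 2^m"
  define c0 where "c0 = (xor u1 v1 + gh) div 2^r"
  have a1: "a0 \<le> 1" unfolding a0_def using carry_le1[of u0 m al 0] lo by simp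
  have b1: "b0 \<le> 1" unfolding b0_def using carry_le1[of v0 m bl 0] lo by simp
  have c1: "c0 \<le> 1" unfolding c0_def using carry_le1[of "xor u1 v1" r gh 0] hi xor_lt by simp
  have mm: "\<And>L. L mod 2^m < (2::nat)^m" by simp
  have mr: "\<And>L. L mod 2^r < (2::nat)^r" by simp
  have S1: "u1*2^m+u0 + (ah*2^m+al) = (u1+ah+a0)*2^m + (u0+al) mod 2^m"
    using regroup[of u1 m u0 ah al 0] unfolding a0_def by simp
  have S2: "v1*2^m+v0 + (bh*2^m+bl) = (v1+bh+b0)*2^m + (v0+bl) mod 2^m"
    using regroup[of v1 m v0 bh bl 0] unfolding b0_def by simp
  have xuv: "xor (u1*2^m+u0) (v1*2^m+v0) = xor u1 v1 * 2^m + xor u0 v0" using xor_split lo by blast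
  have x0: "xor u0 v0 < 2^m" using xor_lt lo by blast
  have rv1: "rotv m r (xor u1 v1 * 2^m + xor u0 v0) = xor u0 v0 * 2^r + xor u1 v1"
    unfolding rotv_def using x0 by simp
  have S3: "xor u0 v0 * 2^r + xor u1 v1 + (gl*2^r+gh) = (xor u0 v0 + gl + c0)*2^r + (xor u1 v1 + gh) mod 2^r"
    using regroup[of "xor u0 v0" r "xor u1 v1" gl gh 0] unfolding c0_def by simp
  have mr': "(2::nat)^(m+r) = 2^(r+m)" by (simp add: add.commute)
  let ?H1 = "(u1+ah+a0) mod 2^r" and ?H2 = "(v1+bh+b0) mod 2^r"
  let ?l1 = "(u0+al) mod 2^m" and ?l2 = "(v0+bl) mod 2^m"
  have P: "xor ((u1*2^m+u0 + (ah*2^m+al)) mod 2^(m+r)) ((v1*2^m+v0 + (bh*2^m+bl)) mod 2^(m+r))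
      = xor ?H1 ?H2 * 2^m + xor ?l1 ?l2"
    unfolding S1 S2 split_mod[OF mm] by (rule xor_split[OF mm mm])
  have xl: "xor ?l1 ?l2 < 2^m" using xor_lt mm by blast
  have xh: "xor ?H1 ?H2 < 2^r" using xor_lt mr by blast
  have rvP: "rotv m r (xor ?H1 ?H2 * 2^m + xor ?l1 ?l2) = xor ?l1 ?l2 * 2^r + xor ?H1 ?H2"
    unfolding rotv_def using xl by simp
  have R: "(rotv m r (xor (u1*2^m+u0) (v1*2^m+v0)) + (gl*2^r+gh)) mod 2^(m+r)
      = ((xor u0 v0 + gl + c0) mod 2^m)*2^r + (xor u1 v1 + gh) mod 2^r"
    unfolding xuv rv1 S3 mr' split_mod[OF mr] ..
  have "(rotv m r (xor ((u1*2^m+u0 + (ah*2^m+al)) mod 2^(m+r)) ((v1*2^m+v0 + (bh*2^m+bl)) mod 2^(m+r)))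
            = (rotv m r (xor (u1*2^m+u0) (v1*2^m+v0)) + (gl*2^r+gh)) mod 2^(m+r))
     \<longleftrightarrow> xor ?l1 ?l2 = (xor u0 v0 + gl + c0) mod 2^m \<and> xor ?H1 ?H2 = (xor u1 v1 + gh) mod 2^r"
    unfolding P rvP R using hl_eq[OF xh mr] by blast
  moreover have "okS m c0 al bl gl u0 v0 \<longleftrightarrow> xor ?l1 ?l2 = (xor u0 v0 + gl + c0) mod 2^m"
    unfolding okS_def using c1 by (auto simp: le_Suc_eq)
  moreover have "okS r (4*a0 + 2*b0) ah bh gh u1 v1 \<longleftrightarrow> xor ?H1 ?H2 = (xor u1 v1 + gh) mod 2^r"
    unfolding okS_def using a1 b1 by (auto simp: le_Suc_eq)
  ultimately show ?thesis unfolding a0_def b0_def c0_def by simp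
qed

lemma fin_low: "c \<le> 1 \<Longrightarrow> u0 < 2^m \<Longrightarrow> v0 < 2^m \<Longrightarrow> al < 2^m \<Longrightarrow> bl < 2^m \<Longrightarrow> gl < 2^m \<Longrightarrow>
  finS m c al bl gl u0 v0 div 2 = 2*((u0+al) div 2^m) + (v0+bl) div 2^m"
proof -
  assume h: "c \<le> 1" "u0 < 2^m" "v0 < 2^m" "al < 2^m" "bl < 2^m" "gl < 2^m"
  have z: "(xor u0 v0 + gl + c mod 2) div 2^m \<le> 1" using carry_le1[of "xor u0 v0" m gl "c mod 2"] h xor_lt by simp
  have "c div 4 = 0" "c div 2 mod 2 = 0" using h by auto
  then show ?thesis unfolding finS_def using z by auto
qed

lemma fin_high: "a \<le> 1 \<Longrightarrow> b \<le> 1 \<Longrightarrow> u1 < 2^r \<Longrightarrow> v1 < 2^r \<Longrightarrow> gh < 2^r \<Longrightarrow>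
  finS r (4*a+2*b) ah bh gh u1 v1 mod 2 = (xor u1 v1 + gh) div 2^r"
proof -
  assume h: "a \<le> 1" "b \<le> 1" "u1 < 2^r" "v1 < 2^r" "gh < 2^r"
  have z: "(xor u1 v1 + gh + 0) div 2^r \<le> 1" using carry_le1[of "xor u1 v1" r gh 0] h xor_lt by simp
  have q: "(4*a+2*b) div 4 = a" "(4*a+2*b) div 2 mod 2 = b" "(4*a+2*b) mod 2 = 0" using h by (auto simp: le_Suc_eq)
  have e: "finS r (4*a+2*b) ah bh gh u1 v1 = 2*(2*((u1+ah+a) div 2^r) + (v1+bh+b) div 2^r) + (xor u1 v1 + gh + 0) div 2^r"
    unfolding finS_def q by simp
  have g: "\<And>q z::nat. z \<le> 1 \<Longrightarrow> (2*q + z) mod 2 = z" by presburger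
  have "finS r (4*a+2*b) ah bh gh u1 v1 mod 2 = (xor u1 v1 + gh + 0) div 2^r" unfolding e by (rule g[OF z])
  then show ?thesis by simp
qed



lemma okS_2: "okS r (Suc (Suc 0)) = okS r 2" by (simp add: numeral_2_eq_2)

lemma sumB: "(\<Sum>a\<in>(UNIV::bool set). f a) = f False + f True"
  by (simp add: UNIV_bool)

theorem theorem2:
  fixes n r :: nat and \<alpha> \<beta> \<gamma> \<alpha>' \<beta>' \<gamma>' :: "bool list"
  assumes "n \<ge> 2" and "1 \<le> r" and "r \<le> n - 1"
    and "length \<alpha> = n - r" and "length \<beta> = n - r" and "length \<gamma> = n - r"
    and "length \<alpha>' = r" and "length \<beta>' = r" and "length \<gamma>' = r"
  shows "adpXR n r (\<alpha>' @ \<alpha>) (\<beta>' @ \<beta>) (\<gamma> @ \<gamma>') =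
    (\<Sum>a\<in>(UNIV::bool set). \<Sum>b\<in>(UNIV::bool set). \<Sum>c\<in>(UNIV::bool set).
       padp a b \<alpha> \<beta> (bv_cpl \<gamma> c) * cadp c (bv_cpl \<alpha>' a) (bv_cpl \<beta>' b) \<gamma>')"
proof -
  define m where "m = n - r"
  have nmr: "n = m + r" and rn: "r < n" using assms by (auto simp: m_def)
  have lm: "length \<alpha> = m" "length \<beta> = m" "length \<gamma> = m" using assms m_def by auto
  have lr: "length \<alpha>' = r" "length \<beta>' = r" "length \<gamma>' = r" using assms by auto
  define av where "av = bv_val \<alpha>"
  define bv where "bv = bv_val \<beta>"
  define gv where "gv = bv_val \<gamma>"
  define av' where "av' = bv_val \<alpha>'"
  define bv' where "bv' = bv_val \<beta>'"
  define gv' where "gv' = bv_val \<gamma>'"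
  have ltm: "av < 2^m" "bv < 2^m" "gv < 2^m" unfolding av_def bv_def gv_def using bv_val_lt lm by metis+
  have ltr: "av' < 2^r" "bv' < 2^r" "gv' < 2^r" unfolding av'_def bv'_def gv'_def using bv_val_lt lr by metis+
  define AV where "AV = av'*2^m + av"
  define BV where "BV = bv'*2^m + bv"
  define GV where "GV = gv*2^r + gv'"
  have vA: "bv_val (\<alpha>'@\<alpha>) = AV" unfolding AV_def av_def av'_def by (simp add: bv_val_append lm)
  have vB: "bv_val (\<beta>'@\<beta>) = BV" unfolding BV_def bv_def bv'_def by (simp add: bv_val_append lm)
  have vG: "bv_val (\<gamma>@\<gamma>') = GV" unfolding GV_def gv_def gv'_def by (simp add: bv_val_append lr)
  have lA: "length (\<alpha>'@\<alpha>) = n" "length (\<beta>'@\<beta>) = n" "length (\<gamma>@\<gamma>') = n" using lm lr nmr by auto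
  define Q where "Q u v \<longleftrightarrow> rotv m r (xor ((u+AV) mod 2^n) ((v+BV) mod 2^n)) = (rotv m r (xor u v) + GV) mod 2^n" for u v
  define Pl where "Pl x y \<longleftrightarrow> bv_rotl (bv_xor (bv_add x (\<alpha>'@\<alpha>)) (bv_add y (\<beta>'@\<beta>))) r = bv_add (bv_rotl (bv_xor x y) r) (\<gamma>@\<gamma>')" for x y
  have PQ: "Pl x y \<longleftrightarrow> Q (bv_val x) (bv_val y)" if "length x = n" "length y = n" for x y
  proof -
    have "Pl x y \<longleftrightarrow> bv_val (bv_rotl (bv_xor (bv_add x (\<alpha>'@\<alpha>)) (bv_add y (\<beta>'@\<beta>))) r) = bv_val (bv_add (bv_rotl (bv_xor x y) r) (\<gamma>@\<gamma>'))"
      unfolding Pl_def by (rule bv_eq_iff) (simp add: that)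
    also have "\<dots> \<longleftrightarrow> Q (bv_val x) (bv_val y)"
    proof -
      let ?L = "bv_xor (bv_add x (\<alpha>'@\<alpha>)) (bv_add y (\<beta>'@\<beta>))"
      let ?R = "bv_xor x y"
      have l1: "length ?L = n" "length ?R = n" using that by simp_all
      have v1: "bv_val ?L = xor ((bv_val x + AV) mod 2^n) ((bv_val y + BV) mod 2^n)"
        using that by (simp add: bv_val_xor bv_val_add vA vB)
      have v2: "bv_val ?R = xor (bv_val x) (bv_val y)" using that by (simp add: bv_val_xor)
      have r1: "bv_val (bv_rotl ?L r) = rotv m r (bv_val ?L)"
        using bv_val_rotl[of r ?L] l1 rn that unfolding rotv_def m_def by simp
      have r2: "bv_val (bv_rotl ?R r) = rotv m r (bv_val ?R)"
        using bv_val_rotl[of r ?R] l1 rn that unfolding rotv_def m_def by simp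
      have r3: "bv_val (bv_add (bv_rotl ?R r) (\<gamma>@\<gamma>')) = (bv_val (bv_rotl ?R r) + GV) mod 2^n"
        using l1 by (simp add: bv_val_add vG)
      show ?thesis unfolding r3 r1 r2 v1 v2 Q_def ..
    qed
    finally show ?thesis .
  qed
  define LS where "LS = {(x, y). length x = n \<and> length y = n \<and> Pl x y}"
  define NS where "NS = Sigma {..<(2::nat)^n} (\<lambda>u. {..<2^n} \<inter> {v. Q u v})"
  have bij: "bij_betw (\<lambda>(x,y). (bv_val x, bv_val y)) LS NS"
    unfolding bij_betw_def
  proof
    show "inj_on (\<lambda>(x,y). (bv_val x, bv_val y)) LS"
      unfolding LS_def inj_on_def using bv_val_inj by auto
    show "(\<lambda>(x,y). (bv_val x, bv_val y)) ` LS = NS"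
    proof
      show "(\<lambda>(x,y). (bv_val x, bv_val y)) ` LS \<subseteq> NS"
      proof
        fix p assume "p \<in> (\<lambda>(x,y). (bv_val x, bv_val y)) ` LS"
        then obtain x y where xy: "length x = n" "length y = n" "Pl x y" "p = (bv_val x, bv_val y)"
          unfolding LS_def by auto
        have "Q (bv_val x) (bv_val y)" using PQ xy by blast
        moreover have "bv_val x < 2^n" "bv_val y < 2^n" using bv_val_lt xy by metis+
        ultimately show "p \<in> NS" unfolding NS_def using xy by simp
      qed
      show "NS \<subseteq> (\<lambda>(x,y). (bv_val x, bv_val y)) ` LS"
      proof
        fix p assume "p \<in> NS"
        then obtain u v where p: "p = (u,v)" "u < 2^n" "v < 2^n" "Q u v" unfolding NS_def by auto
        have "(bv_of n u, bv_of n v) \<in> LS" unfolding LS_def using PQ[of "bv_of n u" "bv_of n v"] p by simp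
        moreover have "p = (\<lambda>(x,y). (bv_val x, bv_val y)) (bv_of n u, bv_of n v)" using p by simp
        ultimately show "p \<in> (\<lambda>(x,y). (bv_val x, bv_val y)) ` LS" by blast
      qed
    qed
  qed
  have cardLS: "real (card LS) = (\<Sum>u<2^n. \<Sum>v<2^n. of_bool (Q u v))"
    using bij_betw_same_card[OF bij] unfolding NS_def by (simp add: card_SigmaI sum_of_bool_eq)
  have adp: "adpXR n r (\<alpha>' @ \<alpha>) (\<beta>' @ \<beta>) (\<gamma> @ \<gamma>') = (\<Sum>u<2^n. \<Sum>v<2^n. of_bool (Q u v)) / 4^n"
    unfolding adpXR_def cardLS[symmetric] LS_def Pl_def ..
  define Fl where "Fl u0 v0 d = (case d of (a,b,c) \<Rightarrow> (of_bool (okS m (of_bool c) av bv gv u0 v0 \<and>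
      finS m (of_bool c) av bv gv u0 v0 div 2 = 2*of_bool a + of_bool b) :: real))" for u0 v0 d
  define Gh where "Gh u1 v1 d = (case d of (a,b,c) \<Rightarrow> (of_bool (okS r (4*of_bool a + 2*of_bool b) av' bv' gv' u1 v1 \<and>
      finS r (4*of_bool a + 2*of_bool b) av' bv' gv' u1 v1 mod 2 = of_bool c) :: real))" for u1 v1 d
  have split: "(\<Sum>u<2^n. \<Sum>v<2^n. of_bool (Q u v) :: real) =
      (\<Sum>u1<2^r. \<Sum>u0<2^m. \<Sum>v1<2^r. \<Sum>v0<2^m. of_bool (Q (u1*2^m+u0) (v1*2^m+v0)))"
    unfolding nmr by (simp only: sum_split_pow)
  have dec: "(of_bool (Q (u1*2^m+u0) (v1*2^m+v0)) :: real) = (\<Sum>d\<in>UNIV. Fl u0 v0 d * Gh u1 v1 d)"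
    if "u1 < 2^r" "u0 < 2^m" "v1 < 2^r" "v0 < 2^m" for u1 u0 v1 v0
  proof -
    define a0 where "a0 = (u0+av) div 2^m"
    define b0 where "b0 = (v0+bv) div 2^m"
    define c0 where "c0 = (xor u1 v1 + gv') div 2^r"
    have a1: "a0 \<le> 1" unfolding a0_def using carry_le1[of u0 m av 0] ltm that by simp
    have b1: "b0 \<le> 1" unfolding b0_def using carry_le1[of v0 m bv 0] ltm that by simp
    have c1: "c0 \<le> 1" unfolding c0_def using carry_le1[of "xor u1 v1" r gv' 0] ltr that xor_lt by simp
    have q: "Q (u1*2^m+u0) (v1*2^m+v0) \<longleftrightarrow> okS m c0 av bv gv u0 v0 \<and> okS r (4*a0+2*b0) av' bv' gv' u1 v1"
      unfolding Q_def AV_def BV_def GV_def nmr a0_def b0_def c0_def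
      using Qdec[of u0 m v0 av bv gv u1 r v1 av' bv' gv'] that ltm ltr by simp
    have fl: "finS m (of_bool c) av bv gv u0 v0 div 2 = 2*a0+b0" for c
      unfolding a0_def b0_def using fin_low[of "of_bool c" u0 m v0 av bv gv] that ltm by simp
    have fh: "finS r (4*of_bool a + 2*of_bool b) av' bv' gv' u1 v1 mod 2 = c0" for a b
      unfolding c0_def using fin_high[of "of_bool a" "of_bool b" u1 r v1 gv' av' bv'] that ltr by simp
    have "(\<Sum>d\<in>UNIV. Fl u0 v0 d * Gh u1 v1 d) = (\<Sum>a\<in>UNIV. \<Sum>b\<in>UNIV. \<Sum>c\<in>UNIV. Fl u0 v0 (a,b,c) * Gh u1 v1 (a,b,c))"
      by (rule sum_triple)
    also have "\<dots> = of_bool (okS m c0 av bv gv u0 v0 \<and> okS r (4*a0+2*b0) av' bv' gv' u1 v1)"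
    proof -
      obtain A0 B0 C0 where ob: "a0 = of_bool A0" "b0 = of_bool B0" "c0 = of_bool C0"
        using a1 b1 c1 by (metis le_SucE le_zero_eq of_bool_eq(1) of_bool_eq(2) One_nat_def)
      show ?thesis unfolding Fl_def Gh_def sumB fl fh ob
        by (cases A0; cases B0; cases C0) (simp_all add: okS_2)
    qed
    finally show ?thesis using q by simp
  qed
  have "(\<Sum>u1<2^r. \<Sum>u0<2^m. \<Sum>v1<2^r. \<Sum>v0<2^m. of_bool (Q (u1*2^m+u0) (v1*2^m+v0)) :: real)
      = (\<Sum>u1<2^r. \<Sum>u0<2^m. \<Sum>v1<2^r. \<Sum>v0<2^m. \<Sum>d\<in>UNIV. Fl u0 v0 d * Gh u1 v1 d)"
    using dec by simp
  also have "\<dots> = (\<Sum>d\<in>UNIV. (\<Sum>u0<2^m. \<Sum>v0<2^m. Fl u0 v0 d) * (\<Sum>u1<2^r. \<Sum>v1<2^r. Gh u1 v1 d))"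
    by (rule rearr)
  also have "\<dots> = (\<Sum>d\<in>UNIV. (4^m * (case d of (a,b,c) \<Rightarrow> padp a b \<alpha> \<beta> (bv_cpl \<gamma> c))) *
       (4^r * (case d of (a,b,c) \<Rightarrow> cadp c (bv_cpl \<alpha>' a) (bv_cpl \<beta>' b) \<gamma>')))"
  proof (rule sum.cong[OF refl])
    fix d :: "bool \<times> bool \<times> bool"
    obtain a b c where d: "d = (a,b,c)" by (cases d) auto
    have "(\<Sum>u0<2^m. \<Sum>v0<2^m. Fl u0 v0 d) = 4^m * padp a b \<alpha> \<beta> (bv_cpl \<gamma> c)"
      unfolding Fl_def d av_def bv_def gv_def
      using gen_count[OF lm, of "of_bool c" "\<lambda>t. t div 2 = 2*of_bool a + of_bool b"]
      by (simp add: padp_eq lm)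
    moreover have "(\<Sum>u1<2^r. \<Sum>v1<2^r. Gh u1 v1 d) = 4^r * cadp c (bv_cpl \<alpha>' a) (bv_cpl \<beta>' b) \<gamma>'"
      unfolding Gh_def d av'_def bv'_def gv'_def
      using gen_count[OF lr, of "4*of_bool a + 2*of_bool b" "\<lambda>t. t mod 2 = of_bool c"]
      by (simp add: cadp_eq lr)
    ultimately show "(\<Sum>u0<2^m. \<Sum>v0<2^m. Fl u0 v0 d) * (\<Sum>u1<2^r. \<Sum>v1<2^r. Gh u1 v1 d) =
       (4^m * (case d of (a,b,c) \<Rightarrow> padp a b \<alpha> \<beta> (bv_cpl \<gamma> c))) *
       (4^r * (case d of (a,b,c) \<Rightarrow> cadp c (bv_cpl \<alpha>' a) (bv_cpl \<beta>' b) \<gamma>'))" using d by simp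
  qed
  also have "\<dots> = 4^n * (\<Sum>d\<in>UNIV. (case d of (a,b,c) \<Rightarrow> padp a b \<alpha> \<beta> (bv_cpl \<gamma> c) * cadp c (bv_cpl \<alpha>' a) (bv_cpl \<beta>' b) \<gamma>'))"
    unfolding nmr power_add sum_distrib_left by (rule sum.cong) (auto simp: algebra_simps split: prod.split)
  finally have main: "(\<Sum>u<2^n. \<Sum>v<2^n. of_bool (Q u v) :: real) = 4^n * (\<Sum>d\<in>UNIV. (case d of (a,b,c) \<Rightarrow> padp a b \<alpha> \<beta> (bv_cpl \<gamma> c) * cadp c (bv_cpl \<alpha>' a) (bv_cpl \<beta>' b) \<gamma>'))"
    using split by simp
  show ?thesis unfolding adp main sum_triple by simp
qed
end
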